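(* Let $X$ be a finite set with $|X|\ge 3$, let $\mathcal T$ be a triplet cover for a tree $T\in B(X)$, and let $x\in X$. If $\mu(x)=2$, then $\deg_{\mathcal T}(x)=1$.
   Context: A binary phylogenetic $X$-tree is an unrooted tree whose leaf set is $X$ and all of whose non-leaf vertices are unlabelled of degree three; $B(X)$ is the set of such trees; $\mathring V$ is the set of interior vertices. Pairs in $\binom{X}{2}$ are written $ab$, triples $abc$. Given $\mathcal T\subseteq\binom{X}{2}$, a triple $abc$ supports $v\in\mathring V$ if $a,b,c$ lie one in each of the three components of $T$ minus $v$ and $ab,ac,bc\in\mathcal T$; $S_v(\mathcal T)$ is the set of such triples; $\mathcal T$ is a triplet cover for $T$ if $S_v(\mathcal T)\neq\emptyset$ for all $v\in\mathring V$. The support graph $G(\mathcal T)$ is the bipartite graph on $X\amalg\mathring V$ with $\{x,v\}$ an edge iff $x\in A$ for all $A\in S_v(\mathcal T)$; $\deg_{\mathcal T}(x)$ is the degree of $x$ in $G(\mathcal T)$. The multiplicity $\mu(x)=\mu_{\mathcal T}(x)$ is the number of elements of $\mathcal T$ containing $x$. *)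

theory Defs
  imports Main
begin

text \<open>An unrooted tree is given by a finite vertex set V and a set E of edges,
each edge being a two-element subset of V. The leaf set is X (leaves are
labelled by themselves).\<close>

definition vdegree :: "'a set set \<Rightarrow> 'a \<Rightarrow> nat" where
  "vdegree E v = card {e \<in> E. v \<in> e}"

definition reach_in :: "'a set \<Rightarrow> 'a set set \<Rightarrow> 'a \<Rightarrow> 'a \<Rightarrow> bool" where
  "reach_in W E = (\<lambda>u w. u \<in> W \<and> w \<in> W \<and> {u, w} \<in> E)\<^sup>*\<^sup>*"

definition is_tree :: "'a set \<Rightarrow> 'a set set \<Rightarrow> bool" where
  "is_tree V E \<longleftrightarrow> finite V \<and> V \<noteq> {} \<and>
     (\<forall>e\<in>E. \<exists>u w. e = {u, w} \<and> u \<noteq> w \<and> u \<in> V \<and> w \<in> V) \<and>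
     (\<forall>a\<in>V. \<forall>b\<in>V. reach_in V E a b) \<and>
     card E = card V - 1"

definition binary_phylo_tree :: "'a set \<Rightarrow> 'a set \<Rightarrow> 'a set set \<Rightarrow> bool" where
  "binary_phylo_tree X V E \<longleftrightarrow> is_tree V E \<and> X \<subseteq> V \<and>
     (\<forall>x\<in>X. vdegree E x = 1) \<and> (\<forall>v\<in>V - X. vdegree E v = 3)"

definition interior :: "'a set \<Rightarrow> 'a set \<Rightarrow> 'a set" where
  "interior X V = V - X"

definition separated :: "'a set \<Rightarrow> 'a set set \<Rightarrow> 'a \<Rightarrow> 'a \<Rightarrow> 'a \<Rightarrow> bool" where
  "separated V E v a b \<longleftrightarrow> a \<in> V - {v} \<and> b \<in> V - {v} \<and> \<not> reach_in (V - {v}) E a b"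

definition supp_triples :: "'a set \<Rightarrow> 'a set \<Rightarrow> 'a set set \<Rightarrow> 'a set set \<Rightarrow> 'a \<Rightarrow> 'a set set" where
  "supp_triples X V E Tr v = {A. \<exists>a b c. A = {a, b, c} \<and> a \<in> X \<and> b \<in> X \<and> c \<in> X \<and>
      separated V E v a b \<and> separated V E v a c \<and> separated V E v b c \<and>
      {a, b} \<in> Tr \<and> {a, c} \<in> Tr \<and> {b, c} \<in> Tr}"

definition triplet_cover :: "'a set \<Rightarrow> 'a set \<Rightarrow> 'a set set \<Rightarrow> 'a set set \<Rightarrow> bool" where
  "triplet_cover X V E Tr \<longleftrightarrow> Tr \<subseteq> {p. p \<subseteq> X \<and> card p = 2} \<and>
     (\<forall>v\<in>interior X V. supp_triples X V E Tr v \<noteq> {})"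

text \<open>Degree of x in the support graph G(T).\<close>
definition support_deg :: "'a set \<Rightarrow> 'a set \<Rightarrow> 'a set set \<Rightarrow> 'a set set \<Rightarrow> 'a \<Rightarrow> nat" where
  "support_deg X V E Tr x = card {v \<in> interior X V. \<forall>A\<in>supp_triples X V E Tr v. x \<in> A}"

definition multiplicity_in :: "'a set set \<Rightarrow> 'a \<Rightarrow> nat" where
  "multiplicity_in Tr x = card {p \<in> Tr. x \<in> p}"

end

theory Submission
  imports Defs
begin

lemma reach_refl: "reach_in W E a a" by (simp add: reach_in_def)

lemma reach_step: "u\<in>W \<Longrightarrow> w\<in>W \<Longrightarrow> {u,w}\<in>E \<Longrightarrow> reach_in W E w z \<Longrightarrow> reach_in W E u z"
  unfolding reach_in_def by (rule converse_rtranclp_into_rtranclp) auto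

lemma reach_trans: "reach_in W E a b \<Longrightarrow> reach_in W E b c \<Longrightarrow> reach_in W E a c"
  unfolding reach_in_def by (rule rtranclp_trans)

lemma reach_sym:
  assumes "reach_in W E a b" shows "reach_in W E b a"
  using assms unfolding reach_in_def
proof (induction rule: rtranclp_induct)
  case base show ?case by simp
next
  case (step y z)
  have "{z,y} \<in> E" using step(2) by (simp add: insert_commute)
  then show ?case using step converse_rtranclp_into_rtranclp[of "\<lambda>u w. u \<in> W \<and> w \<in> W \<and> {u, w} \<in> E" z y a]
    by auto
qed

lemma reach_notin: "reach_in W E u w \<Longrightarrow> u \<notin> W \<Longrightarrow> u = w"
  unfolding reach_in_def by (erule converse_rtranclpE) auto

lemma reach_key:
  assumes "reach_in V E a t" "t \<noteq> v"
  shows "reach_in (V-{v}) E a t \<or> reach_in (V-{t}) E a v"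
proof -
  have "(\<lambda>u w. u\<in>V \<and> w\<in>V \<and> {u,w}\<in>E)\<^sup>*\<^sup>* a t" using assms(1) by (simp add: reach_in_def)
  then show ?thesis
  proof (induction rule: converse_rtranclp_induct)
    case base then show ?case by (simp add: reach_refl)
  next
    case (step a a')
    from step.IH show ?case
    proof
      assume h: "reach_in (V - {v}) E a' t"
      show ?thesis
      proof (cases "a = v")
        case True then show ?thesis by (simp add: reach_refl)
      next
        case False
        have "a' \<noteq> v" using reach_notin[OF h] assms(2) by auto
        then show ?thesis using False step(1) h reach_step[of a "V-{v}" a' E t] by auto
      qed
    next
      assume h: "reach_in (V - {t}) E a' v"
      show ?thesis
      proof (cases "a = t")
        case True then show ?thesis by (simp add: reach_refl)
      next
        case False
        have "a' \<noteq> t" using reach_notin[OF h] assms(2) by auto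
        then show ?thesis using False step(1) h reach_step[of a "V-{t}" a' E v] by auto
      qed
    qed
  qed
qed

lemma sep_sym: "separated V E v a b \<Longrightarrow> separated V E v b a"
  unfolding separated_def using reach_sym[of "V-{v}" E b a] by blast

lemma sep_neq: "separated V E v a b \<Longrightarrow> a \<noteq> b"
  unfolding separated_def using reach_refl[of "V-{v}" E a] by blast

lemma med_unique:
  assumes conn: "\<forall>a\<in>V. \<forall>b\<in>V. reach_in V E a b" and ne: "v1 \<noteq> v2" and v1: "v1 \<in> V"
    and s1: "separated V E v1 p q" "separated V E v1 p r" "separated V E v1 q r"
    and s2: "separated V E v2 p q" "separated V E v2 p r" "separated V E v2 q r"
  shows False
proof -
  have k: "reach_in (V-{v2}) E y v1 \<or> reach_in (V-{v1}) E y v2" if "y \<in> V" for y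
    using reach_key[of V E y v1 v2] conn that ne v1 by auto
  have inV: "p \<in> V" "q \<in> V" "r \<in> V" using s1 unfolding separated_def by auto
  have T: "\<And>W a b c. reach_in W E a c \<Longrightarrow> reach_in W E b c \<Longrightarrow> reach_in W E a b"
    by (meson reach_sym reach_trans)
  show False using k[OF inV(1)] k[OF inV(2)] k[OF inV(3)] s1 s2 T unfolding separated_def
    by blast
qed

lemma nbr:
  assumes "reach_in V E a w" "a \<noteq> w"
  shows "\<exists>n. {n,w}\<in>E \<and> n\<in>V \<and> n\<noteq>w \<and> reach_in (V-{w}) E a n"
proof -
  have "(\<lambda>u w. u\<in>V \<and> w\<in>V \<and> {u,w}\<in>E)\<^sup>*\<^sup>* a w" using assms(1) by (simp add: reach_in_def)
  then show ?thesis using assms(2)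
  proof (induction rule: converse_rtranclp_induct)
    case base then show ?case by simp
  next
    case (step a a')
    show ?case
    proof (cases "a' = w")
      case True then show ?thesis using step by (auto simp: reach_refl)
    next
      case False
      then obtain n where n: "{n,w}\<in>E" "n\<in>V" "n\<noteq>w" "reach_in (V-{w}) E a' n" using step by auto
      then show ?thesis using False step(1,4) reach_step[of a "V-{w}" a' E n] by auto
    qed
  qed
qed

lemma leaf_reach:
  assumes "reach_in W E a x" "\<forall>e\<in>E. x\<in>e \<longrightarrow> e={x,w}" "w \<notin> W"
  shows "a = x"
  using assms(1) unfolding reach_in_def
proof (cases rule: rtranclp.cases)
  case (rtrancl_into_rtrancl y)
  then have "{y,x} = {x,w}" using assms(2) by auto
  then have "y = w" by (auto simp: doubleton_eq_iff)
  then show ?thesis using rtrancl_into_rtrancl assms(3) by auto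
qed simp

lemma trip:
  assumes "A \<in> supp_triples X V E Tr v" "x \<in> A"
  shows "\<exists>b c. A={x,b,c} \<and> separated V E v x b \<and> separated V E v x c \<and> separated V E v b c
     \<and> {x,b}\<in>Tr \<and> {x,c}\<in>Tr \<and> b\<noteq>c \<and> b\<noteq>x \<and> c\<noteq>x"
proof -
  obtain a b c where h: "A = {a, b, c}" "separated V E v a b" "separated V E v a c" "separated V E v b c"
      "{a, b} \<in> Tr" "{a, c} \<in> Tr" "{b, c} \<in> Tr"
    using assms(1) unfolding supp_triples_def by blast
  have n: "a\<noteq>b" "a\<noteq>c" "b\<noteq>c" using sep_neq[OF h(2)] sep_neq[OF h(3)] sep_neq[OF h(4)] by simp_all
  have s: "separated V E v b a" "separated V E v c a" "separated V E v c b" using sep_sym[OF h(2)] sep_sym[OF h(3)] sep_sym[OF h(4)] by simp_all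
  have t: "{b,a}\<in>Tr" "{c,a}\<in>Tr" "{c,b}\<in>Tr" using h(5,6,7) by (simp_all add: insert_commute)
  have e: "{a,b,c} = {b,a,c}" "{a,b,c} = {c,a,b}" by blast+
  consider "x = a" | "x = b" | "x = c" using assms(2) h(1) by blast
  then show ?thesis
  proof cases
    case 1 then show ?thesis using h n by blast
  next
    case 2 then show ?thesis using h(1,3,4,7) n s(1) t(1) e(1) by (intro exI[of _ a] exI[of _ c]) simp
  next
    case 3 then show ?thesis using h(1,2) n s(2,3) t(2,3) e(2) by (intro exI[of _ a] exI[of _ b]) simp
  qed
qed

theorem lemma2:
  fixes X V :: "'a set" and E Tr :: "'a set set" and x :: 'a
  assumes "finite X" and "card X \<ge> 3"
    and "binary_phylo_tree X V E"
    and "triplet_cover X V E Tr"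
    and "x \<in> X"
    and "multiplicity_in Tr x = 2"
  shows "support_deg X V E Tr x = 1"
proof -
  have finV: "finite V" and edges: "\<forall>e\<in>E. \<exists>u w. e = {u, w} \<and> u \<noteq> w \<and> u \<in> V \<and> w \<in> V"
    and conn: "\<forall>a\<in>V. \<forall>b\<in>V. reach_in V E a b" and XV: "X \<subseteq> V"
    and degX: "\<forall>x\<in>X. vdegree E x = 1" and degI: "\<forall>v\<in>V - X. vdegree E v = 3"
    using assms(3) unfolding binary_phylo_tree_def is_tree_def by auto
  have cover: "\<forall>v\<in>interior X V. supp_triples X V E Tr v \<noteq> {}"
    using assms(4) unfolding triplet_cover_def by auto
  have finE: "finite E"
  proof -
    have "E \<subseteq> Pow V" using edges by auto
    then show ?thesis using finV finite_subset by blast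
  qed
  have xV: "x \<in> V" using assms(5) XV by auto
  have "vdegree E x = 1" using degX assms(5) by blast
  then have "card {e\<in>E. x\<in>e} = 1" unfolding vdegree_def .
  then obtain e0 where e0: "{e\<in>E. x\<in>e} = {e0}" by (rule card_1_singletonE)
  then have e0E: "e0 \<in> E" "x \<in> e0" by auto
  have "\<exists>u w. e0 = {u, w} \<and> u \<noteq> w \<and> u \<in> V \<and> w \<in> V" using edges e0E(1) by (rule bspec)
  then obtain u u' where uu0: "e0 = {u,u'}" "u \<noteq> u'" "u \<in> V" "u' \<in> V" by blast
  note uu = uu0 e0E
  obtain w where xw: "{x,w} \<in> E" "w \<noteq> x" "w \<in> V" and e0w: "e0 = {x,w}"
  proof (cases "x = u")
    case True then show ?thesis using uu that[of u'] by simp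
  next
    case False then have "x = u'" using uu by auto
    then show ?thesis using uu that[of u] by (simp add: insert_commute)
  qed
  have uniq: "\<forall>e\<in>E. x\<in>e \<longrightarrow> e = {x,w}" using e0 e0w by auto
  have wX: "w \<notin> X"
  proof
    assume wX: "w \<in> X"
    have "vdegree E w = 1" using degX wX by blast
    then have "card {e\<in>E. w\<in>e} = 1" unfolding vdegree_def .
    then obtain e1 where e1: "{e\<in>E. w\<in>e} = {e1}" by (rule card_1_singletonE)
    have "{x,w} \<in> {e\<in>E. w\<in>e}" using xw by simp
    then have "e1 = {x,w}" using e1 by simp
    then have uniqw: "\<forall>e\<in>E. w\<in>e \<longrightarrow> e = {x,w}" using e1 by auto
    have "a \<in> {x,w}" if "a \<in> V" for a
    proof -
      have "(\<lambda>u w. u\<in>V \<and> w\<in>V \<and> {u,w}\<in>E)\<^sup>*\<^sup>* x a" using conn xV that by (simp add: reach_in_def)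
      then show ?thesis
      proof (induction rule: rtranclp_induct)
        case base then show ?case by simp
      next
        case (step y z)
        have yz: "{y,z} \<in> E" using step.hyps(2) by simp
        have "y = x \<or> y = w" using step.IH by simp
        then have "{y,z} = {x,w}"
        proof
          assume "y = x" then show ?thesis using uniq yz by simp
        next
          assume "y = w" then show ?thesis using uniqw yz by simp
        qed
        then show ?case by (auto simp: doubleton_eq_iff)
      qed
    qed
    then have "X \<subseteq> {x,w}" using XV by auto
    then have "card X \<le> card {x,w}" by (simp add: card_mono)
    also have "\<dots> \<le> 2" by (simp add: card_insert_le_m1)
    finally show False using assms(2) by simp
  qed
  define S where "S = {v \<in> interior X V. \<forall>A\<in>supp_triples X V E Tr v. x \<in> A}"
  have wI: "w \<in> interior X V" using wX xw unfolding interior_def by auto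
  have wS: "w \<in> S"
    unfolding S_def
  proof (intro CollectI conjI ballI wI)
    fix A assume "A \<in> supp_triples X V E Tr w"
    then obtain a b c where h: "A = {a, b, c}" "separated V E w a b" "separated V E w a c" "separated V E w b c"
      unfolding supp_triples_def by blast
    have gn: "\<exists>n. {n,w}\<in>E \<and> n\<in>V \<and> n\<noteq>w \<and> reach_in (V-{w}) E y n" if "y \<in> V - {w}" for y
      using nbr[of V E y w] conn that xw by auto
    have abc: "a \<in> V-{w}" "b \<in> V-{w}" "c \<in> V-{w}" using h unfolding separated_def by auto
    obtain na where na: "{na,w}\<in>E" "reach_in (V-{w}) E a na" using gn[OF abc(1)] by blast
    obtain nb where nb: "{nb,w}\<in>E" "reach_in (V-{w}) E b nb" using gn[OF abc(2)] by blast
    obtain nc where nc: "{nc,w}\<in>E" "reach_in (V-{w}) E c nc" using gn[OF abc(3)] by blast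
    have T: "\<And>W a b c. reach_in W E a c \<Longrightarrow> reach_in W E b c \<Longrightarrow> reach_in W E a b"
      by (meson reach_sym reach_trans)
    have dist: "na \<noteq> nb" "na \<noteq> nc" "nb \<noteq> nc"
    proof -
      show "na \<noteq> nb"
      proof
        assume "na = nb"
        then have "reach_in (V-{w}) E a b" using T[OF na(2)] nb(2) by simp
        then show False using h(2) unfolding separated_def by simp
      qed
      show "na \<noteq> nc"
      proof
        assume "na = nc"
        then have "reach_in (V-{w}) E a c" using T[OF na(2)] nc(2) by simp
        then show False using h(3) unfolding separated_def by simp
      qed
      show "nb \<noteq> nc"
      proof
        assume "nb = nc"
        then have "reach_in (V-{w}) E b c" using T[OF nb(2)] nc(2) by simp
        then show False using h(4) unfolding separated_def by simp
      qed
    qed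
    define N where "N = {n. {n,w}\<in>E}"
    have inj: "inj_on (\<lambda>n. {n,w}) N" by (auto simp: inj_on_def doubleton_eq_iff)
    have img: "(\<lambda>n. {n,w}) ` N \<subseteq> {e\<in>E. w\<in>e}" unfolding N_def by auto
    have c3: "card {e\<in>E. w\<in>e} = 3" using degI wX xw unfolding vdegree_def by auto
    have finW: "finite {e\<in>E. w\<in>e}" using finE by simp
    have finN: "finite N" using finite_imageD[OF finite_subset[OF img finW] inj] .
    have "card N = card ((\<lambda>n. {n,w}) ` N)" using inj by (simp add: card_image)
    also have "\<dots> \<le> 3" using card_mono[OF finW img] c3 by simp
    finally have cN: "card N \<le> 3" .
    have "x \<in> {na,nb,nc}"
    proof (rule ccontr)
      assume "x \<notin> {na,nb,nc}"
      then have c4: "card {x,na,nb,nc} = 4" using dist by simp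
      have "{x,na,nb,nc} \<subseteq> N" unfolding N_def using na(1) nb(1) nc(1) xw(1) by simp
      then have "card {x,na,nb,nc} \<le> card N" by (rule card_mono[OF finN])
      then show False using cN c4 by simp
    qed
    then consider "x = na" | "x = nb" | "x = nc" by blast
    then have "a = x \<or> b = x \<or> c = x"
    proof cases
      case 1 then have "reach_in (V-{w}) E a x" using na(2) by simp
      from leaf_reach[OF this uniq] show ?thesis by simp
    next
      case 2 then have "reach_in (V-{w}) E b x" using nb(2) by simp
      from leaf_reach[OF this uniq] show ?thesis by simp
    next
      case 3 then have "reach_in (V-{w}) E c x" using nc(2) by simp
      from leaf_reach[OF this uniq] show ?thesis by simp
    qed
    then show "x \<in> A" using h by auto
  qed
  have uS: "v1 = v2" if v12: "v1 \<in> S" "v2 \<in> S" for v1 v2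
  proof (rule ccontr)
    assume ne: "v1 \<noteq> v2"
    obtain A1 where A1: "A1 \<in> supp_triples X V E Tr v1" "x \<in> A1" using v12(1) cover unfolding S_def by blast
    obtain A2 where A2: "A2 \<in> supp_triples X V E Tr v2" "x \<in> A2" using v12(2) cover unfolding S_def by blast
    obtain b1 c1 where t1: "separated V E v1 x b1" "separated V E v1 x c1" "separated V E v1 b1 c1"
      "{x,b1}\<in>Tr" "{x,c1}\<in>Tr" "b1\<noteq>c1" "b1\<noteq>x" "c1\<noteq>x" using trip[OF A1] by blast
    obtain b2 c2 where t2: "separated V E v2 x b2" "separated V E v2 x c2" "separated V E v2 b2 c2"
      "{x,b2}\<in>Tr" "{x,c2}\<in>Tr" "b2\<noteq>c2" "b2\<noteq>x" "c2\<noteq>x" using trip[OF A2] by blast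
    define P where "P = {p\<in>Tr. x\<in>p}"
    have cP: "card P = 2" using assms(6) unfolding P_def multiplicity_in_def .
    then have finP: "finite P" by (metis card.infinite zero_neq_numeral)
    have sub: "{{x,b1},{x,c1}} \<subseteq> P" using t1 unfolding P_def by auto
    have "card {{x,b1},{x,c1}} = 2" using t1 by (auto simp: doubleton_eq_iff)
    then have Peq: "P = {{x,b1},{x,c1}}" using card_subset_eq[OF finP sub] cP by simp
    have "{x,b2} \<in> P" "{x,c2} \<in> P" using t2 unfolding P_def by auto
    then have "b2 \<in> {b1,c1}" "c2 \<in> {b1,c1}" using Peq t1 t2 by (auto simp: doubleton_eq_iff)
    then have cs: "(b2 = b1 \<and> c2 = c1) \<or> (b2 = c1 \<and> c2 = b1)" using t2 by auto
    have s2: "separated V E v2 x b1 \<and> separated V E v2 x c1 \<and> separated V E v2 b1 c1"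
      using cs
    proof
      assume "b2 = b1 \<and> c2 = c1" then show ?thesis using t2(1-3) by simp
    next
      assume "b2 = c1 \<and> c2 = b1" then show ?thesis using t2(1,2) sep_sym[OF t2(3)] by simp
    qed
    have "v1 \<in> V" using v12(1) unfolding S_def interior_def by auto
    then show False using med_unique[OF conn ne _ t1(1-3)] s2 by blast
  qed
  have "S = {w}" using wS uS by blast
  then show ?thesis unfolding support_deg_def S_def[symmetric] by simp
qed

end
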